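(* Let $\mathcal{P}$ be a polyomino with toric ideal $J_{\mathcal{P}}\subset S$, and let $f=f^+-f^-\in J_{\mathcal{P}}$ be a binomial of degree $\ge 3$, with $V_+=\{v\in V(\mathcal{P}): x_v\mid f^+\}$ and $V_-=\{v\in V(\mathcal{P}): x_v\mid f^-\}$. If there exist $p,q\in V_+$ and $r\in V_-$ such that $p,q$ are the diagonal (resp. anti-diagonal) corners of an inner interval of $\mathcal{P}$ and $r$ is one of the anti-diagonal (resp. diagonal) corners of that interval, then $f$ is redundant in $J_{\mathcal{P}}$.
   Context: For $a\in\mathbb{N}^2$ the cell $[a,a+(1,1)]$ has vertices $a,a+(1,0),a+(0,1),a+(1,1)$ and four edges. A polyomino $\mathcal{P}$ is a finite nonempty set of cells such that any two cells are joined by a sequence of cells of $\mathcal{P}$, consecutive ones sharing an edge. $V(\mathcal{P})$ is the union of vertex sets of its cells; $S=\mathbb{K}[x_v\mid v\in V(\mathcal{P})]$, $\mathbb{K}$ a field, standard graded. For $a=(i,j)$, $b=(k,\ell)$, $i<k$, $j<\ell$, $[a,b]$ has diagonal corners $a,b$ and anti-diagonal corners $(i,\ell),(k,j)$; it is an inner interval if all its cells belong to $\mathcal{P}$. Toric ideal: a hole of $\mathcal{P}$ is a finite nonempty set of cells not in $\mathcal{P}$, connected through paths of its own cells (consecutive cells sharing an edge), maximal with these properties. Order $\mathbb{N}^2$ by $(a_1,a_2)<(b_1,b_2)$ iff $a_1<b_1$ or ($a_1=b_1$ and $a_2<b_2$); the lower left corner of a hole is its minimal vertex. Let $\mathcal{H}_1,\dots,\mathcal{H}_r$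 be the holes with lower left corners $(i_k,j_k)$ and $\mathcal{F}_k=\{(i,j)\in V(\mathcal{P}): i\le i_k, j\le j_k\}$. A horizontal edge interval is a set $\{(t,j):i\le t\le k\}$ such that each $\{(t,j),(t+1,j)\}$, $i\le t<k$, is an edge of a cell of $\mathcal{P}$; maximal if not strictly contained in another; vertical ones analogously. Each $a\in V(\mathcal{P})$ lies in a unique maximal horizontal edge interval $H(a)$ and unique maximal vertical one $V(a)$. With variables $h_H$, $v_V$ (one per maximal horizontal/vertical edge interval) and $w_1,\dots,w_r$, define $\varphi(x_a)=h_{H(a)}v_{V(a)}\prod_{k:a\in\mathcal{F}_k}w_k$; $J_{\mathcal{P}}=\ker\varphi$. A binomial $f$ in a binomial ideal $J$ is redundant if it can be expressed as a linear combination (with polynomial coefficients) of binomials in $J$ of lower degree. *)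

theory Defs
  imports Main "HOL-Library.Poly_Mapping"
begin

type_synonym vertex = "nat \<times> nat"
type_synonym cell = "nat \<times> nat"   (* the cell [a, a+(1,1)] is represented by a *)

(* monomials and polynomials of S = K[x_v | v \<in> V(P)] *)
type_synonym mono = "vertex \<Rightarrow>\<^sub>0 nat"
type_synonym 'a spoly = "mono \<Rightarrow>\<^sub>0 'a"

definition cell_vertices :: "cell \<Rightarrow> vertex set" where
  "cell_vertices a = {a, (fst a + 1, snd a), (fst a, snd a + 1), (fst a + 1, snd a + 1)}"

definition adj_cells :: "cell \<Rightarrow> cell \<Rightarrow> bool" where
  "adj_cells a b \<longleftrightarrow>
     (fst a = fst b \<and> (snd b = snd a + 1 \<or> snd a = snd b + 1)) \<or>
     (snd a = snd b \<and> (fst b = fst a + 1 \<or> fst a = fst b + 1))"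

definition cell_connected :: "cell set \<Rightarrow> bool" where
  "cell_connected C \<longleftrightarrow>
     (\<forall>a\<in>C. \<forall>b\<in>C. (\<lambda>x y. x \<in> C \<and> y \<in> C \<and> adj_cells x y)\<^sup>*\<^sup>* a b)"

definition polyomino :: "cell set \<Rightarrow> bool" where
  "polyomino P \<longleftrightarrow> finite P \<and> P \<noteq> {} \<and> cell_connected P"

definition poly_vertices :: "cell set \<Rightarrow> vertex set" where
  "poly_vertices P = (\<Union>a\<in>P. cell_vertices a)"

definition hole_cand :: "cell set \<Rightarrow> cell set \<Rightarrow> bool" where
  "hole_cand P H \<longleftrightarrow> finite H \<and> H \<noteq> {} \<and> H \<inter> P = {} \<and> cell_connected H"

definition is_hole :: "cell set \<Rightarrow> cell set \<Rightarrow> bool" where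
  "is_hole P H \<longleftrightarrow> hole_cand P H \<and> \<not> (\<exists>H'. hole_cand P H' \<and> H \<subset> H')"

definition lex_le :: "vertex \<Rightarrow> vertex \<Rightarrow> bool" where
  "lex_le a b \<longleftrightarrow> fst a < fst b \<or> (fst a = fst b \<and> snd a \<le> snd b)"

definition lower_left :: "cell set \<Rightarrow> vertex" where
  "lower_left H = (THE v. v \<in> (\<Union>a\<in>H. cell_vertices a) \<and>
                         (\<forall>w\<in>(\<Union>a\<in>H. cell_vertices a). lex_le v w))"

definition F_set :: "cell set \<Rightarrow> cell set \<Rightarrow> vertex set" where
  "F_set P H = {v \<in> poly_vertices P. fst v \<le> fst (lower_left H) \<and> snd v \<le> snd (lower_left H)}"

(* {(t,j),(t+1,j)} is an edge of a cell of P *)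
definition hedge :: "cell set \<Rightarrow> nat \<Rightarrow> nat \<Rightarrow> bool" where
  "hedge P t j \<longleftrightarrow> (t, j) \<in> P \<or> (j > 0 \<and> (t, j - 1) \<in> P)"

(* {(i,t),(i,t+1)} is an edge of a cell of P *)
definition vedge :: "cell set \<Rightarrow> nat \<Rightarrow> nat \<Rightarrow> bool" where
  "vedge P i t \<longleftrightarrow> (i, t) \<in> P \<or> (i > 0 \<and> (i - 1, t) \<in> P)"

definition horiz_interval :: "cell set \<Rightarrow> vertex set \<Rightarrow> bool" where
  "horiz_interval P I \<longleftrightarrow> (\<exists>i k j. i \<le> k \<and> I = {(t, j) | t. i \<le> t \<and> t \<le> k} \<and>
                                  (\<forall>t. i \<le> t \<and> t < k \<longrightarrow> hedge P t j))"

definition vert_interval :: "cell set \<Rightarrow> vertex set \<Rightarrow> bool" where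
  "vert_interval P I \<longleftrightarrow> (\<exists>j l i. j \<le> l \<and> I = {(i, t) | t. j \<le> t \<and> t \<le> l} \<and>
                                 (\<forall>t. j \<le> t \<and> t < l \<longrightarrow> vedge P i t))"

definition max_horiz_interval :: "cell set \<Rightarrow> vertex set \<Rightarrow> bool" where
  "max_horiz_interval P I \<longleftrightarrow> horiz_interval P I \<and> \<not> (\<exists>I'. horiz_interval P I' \<and> I \<subset> I')"

definition max_vert_interval :: "cell set \<Rightarrow> vertex set \<Rightarrow> bool" where
  "max_vert_interval P I \<longleftrightarrow> vert_interval P I \<and> \<not> (\<exists>I'. vert_interval P I' \<and> I \<subset> I')"

definition H_of :: "cell set \<Rightarrow> vertex \<Rightarrow> vertex set" where
  "H_of P a = (THE I. max_horiz_interval P I \<and> a \<in> I)"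

definition V_of :: "cell set \<Rightarrow> vertex \<Rightarrow> vertex set" where
  "V_of P a = (THE I. max_vert_interval P I \<and> a \<in> I)"

(* variables of the target ring: h_H, v_V (indexed by the maximal edge intervals) and
   w_k (indexed by the holes themselves) *)
datatype tvar = HVar "vertex set" | VVar "vertex set" | WVar "cell set"

(* exponent vector of phi(x_a) = h_{H(a)} v_{V(a)} prod_{k : a \<in> F_k} w_k *)
definition phi_exp :: "cell set \<Rightarrow> vertex \<Rightarrow> (tvar \<Rightarrow>\<^sub>0 nat)" where
  "phi_exp P a = Poly_Mapping.single (HVar (H_of P a)) 1 + Poly_Mapping.single (VVar (V_of P a)) 1
     + (\<Sum>H\<in>{H. is_hole P H \<and> a \<in> F_set P H}. Poly_Mapping.single (WVar H) 1)"

definition phi_mono :: "cell set \<Rightarrow> mono \<Rightarrow> (tvar \<Rightarrow>\<^sub>0 nat)" where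
  "phi_mono P m = (\<Sum>a\<in>Poly_Mapping.keys m. \<Sum>i<Poly_Mapping.lookup m a. phi_exp P a)"

definition phi :: "cell set \<Rightarrow> 'a::comm_ring_1 spoly \<Rightarrow> ((tvar \<Rightarrow>\<^sub>0 nat) \<Rightarrow>\<^sub>0 'a)" where
  "phi P f = (\<Sum>m\<in>Poly_Mapping.keys f. Poly_Mapping.single (phi_mono P m) (Poly_Mapping.lookup f m))"

definition in_S :: "cell set \<Rightarrow> 'a::zero spoly \<Rightarrow> bool" where
  "in_S P f \<longleftrightarrow> (\<forall>m\<in>Poly_Mapping.keys f. Poly_Mapping.keys m \<subseteq> poly_vertices P)"

definition toric_ideal :: "cell set \<Rightarrow> 'a::comm_ring_1 spoly set" where
  "toric_ideal P = {f. in_S P f \<and> phi P f = 0}"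

definition mono_deg :: "mono \<Rightarrow> nat" where
  "mono_deg m = (\<Sum>v\<in>Poly_Mapping.keys m. Poly_Mapping.lookup m v)"

(* total degree of a polynomial (0 for the zero polynomial) *)
definition poly_deg :: "'a::zero spoly \<Rightarrow> nat" where
  "poly_deg f = Max (insert 0 (mono_deg ` Poly_Mapping.keys f))"

definition monom :: "mono \<Rightarrow> 'a::{zero,one} spoly" where
  "monom m = Poly_Mapping.single m 1"

definition is_binomial :: "'a::comm_ring_1 spoly \<Rightarrow> bool" where
  "is_binomial g \<longleftrightarrow> (\<exists>u v. g = monom u - monom v)"

definition redundant :: "'a::comm_ring_1 spoly set \<Rightarrow> 'a spoly set \<Rightarrow> 'a spoly \<Rightarrow> bool" where
  "redundant Sring J f \<longleftrightarrow>
     (\<exists>gs :: ('a spoly \<times> 'a spoly) list.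
        (\<forall>(c, g)\<in>set gs. c \<in> Sring \<and> g \<in> J \<and> is_binomial g \<and> poly_deg g < poly_deg f) \<and>
        f = (\<Sum>(c, g)\<leftarrow>gs. c * g))"

definition inner_interval :: "cell set \<Rightarrow> vertex \<Rightarrow> vertex \<Rightarrow> bool" where
  "inner_interval P a b \<longleftrightarrow> fst a < fst b \<and> snd a < snd b \<and>
     (\<forall>c. fst a \<le> fst c \<and> fst c < fst b \<and> snd a \<le> snd c \<and> snd c < snd b \<longrightarrow> c \<in> P)"

end

theory Submission
  imports Defs
begin

lemma sum_lessThan_add: "(\<Sum>i<(x::nat)+y. (c::'b::comm_monoid_add)) = (\<Sum>i<x. c) + (\<Sum>i<y. c)"
  by (induction y) (simp_all add: add.assoc)

lemma phi_mono_add: "phi_mono P (m1 + m2) = phi_mono P m1 + phi_mono P m2"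
  unfolding phi_mono_def
  by (rule setsum_keys_plus_distrib) (simp_all add: sum_lessThan_add)

lemma phi_mono_single: "phi_mono P (Poly_Mapping.single a 1) = phi_exp P a"
  unfolding phi_mono_def by simp

lemma mono_deg_add: "mono_deg (m1 + m2) = mono_deg m1 + mono_deg m2"
  unfolding mono_deg_def
  by (rule setsum_keys_plus_distrib) simp_all

lemma mono_deg_single: "mono_deg (Poly_Mapping.single a 1) = 1"
  unfolding mono_deg_def by simp

lemma keys_monom_diff:
  assumes "a \<noteq> b"
  shows "Poly_Mapping.keys (monom a - monom b :: 'a::comm_ring_1 spoly) = {a, b}"
  using assms by (auto simp: monom_def in_keys_iff lookup_minus lookup_single)

lemma keys_monom_diff_sub:
  shows "Poly_Mapping.keys (monom a - monom b :: 'a::comm_ring_1 spoly) \<subseteq> {a, b}"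
  by (cases "a = b") (auto simp: keys_monom_diff)

lemma phi_monom_diff:
  "phi P (monom a - monom b :: 'a::comm_ring_1 spoly) =
     Poly_Mapping.single (phi_mono P a) 1 - Poly_Mapping.single (phi_mono P b) 1"
proof (cases "a = b")
  case True then show ?thesis by (simp add: phi_def)
next
  case False
  then show ?thesis
    apply (simp only: phi_def keys_monom_diff[OF False])
    apply (simp add: False False[symmetric] monom_def lookup_minus lookup_single single_uminus)
    done
qed

lemma phi_zero_iff:
  "phi P (monom a - monom b :: 'a::comm_ring_1 spoly) = 0 \<longleftrightarrow> phi_mono P a = phi_mono P b"
proof -
  have "Poly_Mapping.single x (1::'a) = Poly_Mapping.single y 1 \<longleftrightarrow> x = y" for x y
    by (metis lookup_single_eq lookup_single_not_eq zero_neq_one)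
  then show ?thesis by (simp add: phi_monom_diff)
qed

lemma poly_deg_monom_diff_le:
  "poly_deg (monom a - monom b :: 'a::comm_ring_1 spoly) \<le> max (mono_deg a) (mono_deg b)"
proof -
  have "finite (insert 0 (mono_deg ` Poly_Mapping.keys (monom a - monom b :: 'a spoly)))" by simp
  moreover have "\<forall>x\<in>insert 0 (mono_deg ` Poly_Mapping.keys (monom a - monom b :: 'a spoly)). x \<le> max (mono_deg a) (mono_deg b)"
    using keys_monom_diff_sub[of a b] by auto
  ultimately show ?thesis unfolding poly_deg_def by simp
qed

lemma poly_deg_monom_diff:
  "a \<noteq> b \<Longrightarrow> poly_deg (monom a - monom b :: 'a::comm_ring_1 spoly) = max (mono_deg a) (mono_deg b)"
  by (simp add: poly_deg_def keys_monom_diff)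

lemma monom_mult: "(monom a :: 'a::comm_ring_1 spoly) * monom b = monom (a + b)"
  by (simp add: monom_def mult_single)

lemma in_S_monom: "in_S P (monom m :: 'a::comm_ring_1 spoly) \<longleftrightarrow> Poly_Mapping.keys m \<subseteq> poly_vertices P"
  by (simp add: in_S_def monom_def)

lemma in_S_monom_diff: "Poly_Mapping.keys a \<subseteq> poly_vertices P \<Longrightarrow> Poly_Mapping.keys b \<subseteq> poly_vertices P \<Longrightarrow>
   in_S P (monom a - monom b :: 'a::comm_ring_1 spoly)"
  using keys_monom_diff_sub[of a b] unfolding in_S_def by blast


lemma horiz_union:
  assumes "horiz_interval P I" "i \<le> k" "\<forall>t. i \<le> t \<and> t < k \<longrightarrow> hedge P t j"
    and "(i, j) \<in> I \<or> (k, j) \<in> I"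
  shows "horiz_interval P (I \<union> {(t, j) | t. i \<le> t \<and> t \<le> k})"
proof -
  obtain i1 k1 j1 where I: "i1 \<le> k1" "I = {(t, j1) | t. i1 \<le> t \<and> t \<le> k1}"
    "\<forall>t. i1 \<le> t \<and> t < k1 \<longrightarrow> hedge P t j1"
    using assms(1) unfolding horiz_interval_def by blast
  have j: "j1 = j" and ov: "(i1 \<le> i \<and> i \<le> k1) \<or> (i1 \<le> k \<and> k \<le> k1)" using assms(4) I(2) by auto
  have "I \<union> {(t, j) | t. i \<le> t \<and> t \<le> k} = {(t, j) | t. min i i1 \<le> t \<and> t \<le> max k k1}"
    using I(2) j ov assms(2) by auto
  moreover have "\<forall>t. min i i1 \<le> t \<and> t < max k k1 \<longrightarrow> hedge P t j"
  proof (intro allI impI)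
    fix t assume "min i i1 \<le> t \<and> t < max k k1"
    then have "(i1 \<le> t \<and> t < k1) \<or> (i \<le> t \<and> t < k)" using ov I(1) assms(2) by auto
    then show "hedge P t j" using I(3) assms(3) j by auto
  qed
  moreover have "min i i1 \<le> max k k1" using assms(2) by simp
  ultimately show ?thesis unfolding horiz_interval_def by blast
qed

lemma vert_union:
  assumes "vert_interval P I" "j \<le> l" "\<forall>t. j \<le> t \<and> t < l \<longrightarrow> vedge P i t"
    and "(i, j) \<in> I \<or> (i, l) \<in> I"
  shows "vert_interval P (I \<union> {(i, t) | t. j \<le> t \<and> t \<le> l})"
proof -
  obtain j1 l1 i1 where I: "j1 \<le> l1" "I = {(i1, t) | t. j1 \<le> t \<and> t \<le> l1}"
    "\<forall>t. j1 \<le> t \<and> t < l1 \<longrightarrow> vedge P i1 t"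
    using assms(1) unfolding vert_interval_def by blast
  have j: "i1 = i" and ov: "(j1 \<le> j \<and> j \<le> l1) \<or> (j1 \<le> l \<and> l \<le> l1)" using assms(4) I(2) by auto
  have "I \<union> {(i, t) | t. j \<le> t \<and> t \<le> l} = {(i, t) | t. min j j1 \<le> t \<and> t \<le> max l l1}"
    using I(2) j ov assms(2) by auto
  moreover have "\<forall>t. min j j1 \<le> t \<and> t < max l l1 \<longrightarrow> vedge P i t"
  proof (intro allI impI)
    fix t assume "min j j1 \<le> t \<and> t < max l l1"
    then have "(j1 \<le> t \<and> t < l1) \<or> (j \<le> t \<and> t < l)" using ov I(1) assms(2) by auto
    then show "vedge P i t" using I(3) assms(3) j by auto
  qed
  moreover have "min j j1 \<le> max l l1" using assms(2) by simp
  ultimately show ?thesis unfolding vert_interval_def by blast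
qed

lemma H_of_eq:
  assumes "i \<le> k" "\<forall>t. i \<le> t \<and> t < k \<longrightarrow> hedge P t j"
  shows "H_of P (i, j) = H_of P (k, j)"
proof -
  have "max_horiz_interval P I \<and> (i, j) \<in> I \<longleftrightarrow> max_horiz_interval P I \<and> (k, j) \<in> I" for I
  proof -
    have *: "(i, j) \<in> I \<and> (k, j) \<in> I" if m: "max_horiz_interval P I" and h: "(i, j) \<in> I \<or> (k, j) \<in> I"
    proof -
      have hu: "horiz_interval P (I \<union> {(t, j) | t. i \<le> t \<and> t \<le> k})"
        using horiz_union[OF _ assms h] m unfolding max_horiz_interval_def by blast
      have "\<not> I \<subset> I \<union> {(t, j) | t. i \<le> t \<and> t \<le> k}"
        using m hu unfolding max_horiz_interval_def by blast
      then have "{(t, j) | t. i \<le> t \<and> t \<le> k} \<subseteq> I" by blast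
      then show ?thesis using assms(1) by auto
    qed
    show ?thesis using * by blast
  qed
  then show ?thesis unfolding H_of_def by simp
qed

lemma V_of_eq:
  assumes "j \<le> l" "\<forall>t. j \<le> t \<and> t < l \<longrightarrow> vedge P i t"
  shows "V_of P (i, j) = V_of P (i, l)"
proof -
  have "max_vert_interval P I \<and> (i, j) \<in> I \<longleftrightarrow> max_vert_interval P I \<and> (i, l) \<in> I" for I
  proof -
    have *: "(i, j) \<in> I \<and> (i, l) \<in> I" if m: "max_vert_interval P I" and h: "(i, j) \<in> I \<or> (i, l) \<in> I"
    proof -
      have hu: "vert_interval P (I \<union> {(i, t) | t. j \<le> t \<and> t \<le> l})"
        using vert_union[OF _ assms h] m unfolding max_vert_interval_def by blast
      have "\<not> I \<subset> I \<union> {(i, t) | t. j \<le> t \<and> t \<le> l}"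
        using m hu unfolding max_vert_interval_def by blast
      then have "{(i, t) | t. j \<le> t \<and> t \<le> l} \<subseteq> I" by blast
      then show ?thesis using assms(1) by auto
    qed
    show ?thesis using * by blast
  qed
  then show ?thesis unfolding V_of_def by simp
qed


lemma lower_left_in:
  assumes "is_hole P H"
  shows "lower_left H \<in> H"
proof -
  have fin: "finite H" and ne: "H \<noteq> {}" using assms unfolding is_hole_def hole_cand_def by auto
  define X where "X = Min (fst ` H)"
  have X: "X \<in> fst ` H" "\<forall>c\<in>H. X \<le> fst c" using fin ne unfolding X_def by auto
  define Y where "Y = Min (snd ` {c\<in>H. fst c = X})"
  have ne2: "{c\<in>H. fst c = X} \<noteq> {}" using X(1) by auto
  have Y: "Y \<in> snd ` {c\<in>H. fst c = X}" "\<forall>c\<in>H. fst c = X \<longrightarrow> Y \<le> snd c"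
    using fin ne2 unfolding Y_def by auto
  have vH: "(X, Y) \<in> H" using Y(1) by auto
  let ?VS = "\<Union>a\<in>H. cell_vertices a"
  have vmin: "\<forall>w\<in>?VS. lex_le (X, Y) w"
  proof
    fix w assume "w \<in> ?VS"
    then obtain c where c: "c \<in> H" "w \<in> cell_vertices c" by blast
    have "lex_le (X, Y) c" using X(2)[rule_format, OF c(1)] Y(2)[rule_format, OF c(1)] unfolding lex_le_def by auto
    moreover have "lex_le c w" using c(2) unfolding cell_vertices_def lex_le_def by auto
    ultimately show "lex_le (X, Y) w" unfolding lex_le_def by auto
  qed
  have vin: "(X, Y) \<in> ?VS" using vH unfolding cell_vertices_def by blast
  have "lower_left H = (X, Y)"
    unfolding lower_left_def
  proof (rule the_equality)
    show "(X, Y) \<in> ?VS \<and> (\<forall>w\<in>?VS. lex_le (X, Y) w)" using vin vmin by blast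
  next
    fix v assume "v \<in> ?VS \<and> (\<forall>w\<in>?VS. lex_le v w)"
    then have "lex_le v (X, Y)" "lex_le (X, Y) v" using vin vmin by auto
    then show "v = (X, Y)" unfolding lex_le_def by (cases v) auto
  qed
  then show ?thesis using vH by simp
qed

lemma hole_extend:
  assumes h: "is_hole P H" and c: "c \<in> H" and d: "d \<notin> P" and adj: "adj_cells c d"
  shows "d \<in> H"
proof (rule ccontr)
  assume dH: "d \<notin> H"
  have hc: "hole_cand P H" and nm: "\<not> (\<exists>H'. hole_cand P H' \<and> H \<subset> H')"
    using h unfolding is_hole_def by auto
  let ?H' = "insert d H"
  let ?R = "\<lambda>x y. x \<in> ?H' \<and> y \<in> ?H' \<and> adj_cells x y"
  have conn: "\<forall>a\<in>H. \<forall>b\<in>H. (\<lambda>x y. x \<in> H \<and> y \<in> H \<and> adj_cells x y)\<^sup>*\<^sup>* a b"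
    using hc unfolding hole_cand_def cell_connected_def by blast
  have lift: "?R\<^sup>*\<^sup>* a b" if "a \<in> H" "b \<in> H" for a b
  proof -
    have "(\<lambda>x y. x \<in> H \<and> y \<in> H \<and> adj_cells x y)\<^sup>*\<^sup>* a b" using conn that by blast
    then show ?thesis by (rule mono_rtranclp[rule_format, rotated]) auto
  qed
  have adjs: "adj_cells d c" using adj unfolding adj_cells_def by auto
  have "cell_connected ?H'"
    unfolding cell_connected_def
  proof (intro ballI)
    fix a b assume a: "a \<in> ?H'" and b: "b \<in> ?H'"
    have dc: "?R\<^sup>*\<^sup>* d c" using adjs c by (intro r_into_rtranclp) auto
    have cd: "?R\<^sup>*\<^sup>* c d" using adj c by (intro r_into_rtranclp) auto
    show "?R\<^sup>*\<^sup>* a b"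
    proof (cases "a = d")
      case True
      show ?thesis
      proof (cases "b = d")
        case True with \<open>a = d\<close> show ?thesis by simp
      next
        case False then have "b \<in> H" using b by simp
        then show ?thesis using True dc lift[OF c] by (meson rtranclp_trans)
      qed
    next
      case False then have aH: "a \<in> H" using a by simp
      show ?thesis
      proof (cases "b = d")
        case True
        then show ?thesis using cd lift[OF aH c] by (meson rtranclp_trans)
      next
        case False then have "b \<in> H" using b by simp
        then show ?thesis using lift aH by blast
      qed
    qed
  qed
  then have "hole_cand P ?H'" using hc d unfolding hole_cand_def by auto
  moreover have "H \<subset> ?H'" using dH by auto
  ultimately show False using nm by blast
qed

lemma holes_bounded:
  assumes P: "finite P" and h: "is_hole P H" and c: "c \<in> H"
  shows "fst c \<le> Max (fst ` P) \<and> snd c \<le> Max (snd ` P)"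
proof -
  have finH: "finite H" using h unfolding is_hole_def hole_cand_def by auto
  have notP1: "d \<notin> P" if "fst d > Max (fst ` P)" for d
  proof
    assume "d \<in> P"
    then have "fst d \<le> Max (fst ` P)" using P by simp
    then show False using that by simp
  qed
  have notP2: "d \<notin> P" if "snd d > Max (snd ` P)" for d
  proof
    assume "d \<in> P"
    then have "snd d \<le> Max (snd ` P)" using P by simp
    then show False using that by simp
  qed
  have 1: "fst c \<le> Max (fst ` P)"
  proof (rule ccontr)
    assume "\<not> ?thesis"
    then have gt: "fst c > Max (fst ` P)" by simp
    have all: "(fst c + n, snd c) \<in> H" for n
    proof (induction n)
      case 0 then show ?case using c by simp
    next
      case (Suc n)
      show ?case
        by (rule hole_extend[OF h Suc]) (use gt notP1 in \<open>auto simp: adj_cells_def\<close>)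
    qed
    have "range (\<lambda>n. (fst c + n, snd c)) \<subseteq> H" using all by auto
    moreover have "inj (\<lambda>n. (fst c + n, snd c))" by (auto simp: inj_def)
    ultimately have "finite (UNIV :: nat set)"
      using finite_imageD[OF finite_subset[OF _ finH]] by blast
    then show False by simp
  qed
  have 2: "snd c \<le> Max (snd ` P)"
  proof (rule ccontr)
    assume "\<not> ?thesis"
    then have gt: "snd c > Max (snd ` P)" by simp
    have all: "(fst c, snd c + n) \<in> H" for n
    proof (induction n)
      case 0 then show ?case using c by simp
    next
      case (Suc n)
      show ?case
        by (rule hole_extend[OF h Suc]) (use gt notP2 in \<open>auto simp: adj_cells_def\<close>)
    qed
    have "range (\<lambda>n. (fst c, snd c + n)) \<subseteq> H" using all by auto
    moreover have "inj (\<lambda>n. (fst c, snd c + n))" by (auto simp: inj_def)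
    ultimately have "finite (UNIV :: nat set)"
      using finite_imageD[OF finite_subset[OF _ finH]] by blast
    then show False by simp
  qed
  show ?thesis using 1 2 by simp
qed

lemma finite_holes:
  assumes "finite P"
  shows "finite {H. is_hole P H}"
proof -
  have "{H. is_hole P H} \<subseteq> Pow ({0..Max (fst ` P)} \<times> {0..Max (snd ` P)})"
  proof
    fix H assume "H \<in> {H. is_hole P H}"
    then have h: "is_hole P H" by simp
    show "H \<in> Pow ({0..Max (fst ` P)} \<times> {0..Max (snd ` P)})"
    proof (rule PowI, rule subsetI)
      fix c assume "c \<in> H"
      then have "fst c \<le> Max (fst ` P) \<and> snd c \<le> Max (snd ` P)" using holes_bounded[OF assms h] by blast
      then show "c \<in> {0..Max (fst ` P)} \<times> {0..Max (snd ` P)}" by (cases c) auto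
    qed
  qed
  then show ?thesis by (rule finite_subset) simp
qed


lemma corners_in:
  assumes "inner_interval P (i, j) (k, l)"
  shows "(i, j) \<in> poly_vertices P" "(k, l) \<in> poly_vertices P" "(i, l) \<in> poly_vertices P" "(k, j) \<in> poly_vertices P"
proof -
  have lt: "i < k" "j < l" using assms unfolding inner_interval_def by auto
  have cell: "(a, b) \<in> P" if "i \<le> a" "a < k" "j \<le> b" "b < l" for a b
    using assms that unfolding inner_interval_def by auto
  have c1: "(i, j) \<in> P" "(k - 1, l - 1) \<in> P" "(i, l - 1) \<in> P" "(k - 1, j) \<in> P"
    using lt by (auto intro!: cell)
  have v: "(i, j) \<in> cell_vertices (i, j)" "(k, l) \<in> cell_vertices (k - 1, l - 1)"
     "(i, l) \<in> cell_vertices (i, l - 1)" "(k, j) \<in> cell_vertices (k - 1, j)"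
    using lt by (auto simp: cell_vertices_def)
  show "(i, j) \<in> poly_vertices P" "(k, l) \<in> poly_vertices P" "(i, l) \<in> poly_vertices P" "(k, j) \<in> poly_vertices P"
    unfolding poly_vertices_def using c1 v by blast+
qed

lemma corners_phi:
  assumes inn: "inner_interval P (i, j) (k, l)" and finP: "finite P"
  shows "phi_exp P (i, j) + phi_exp P (k, l) = phi_exp P (i, l) + phi_exp P (k, j)"
proof -
  have lt: "i < k" "j < l" using inn unfolding inner_interval_def by auto
  have cell: "(a, b) \<in> P" if "i \<le> a" "a < k" "j \<le> b" "b < l" for a b
    using inn that unfolding inner_interval_def by auto
  have H1: "H_of P (i, j) = H_of P (k, j)"
    by (rule H_of_eq) (use lt cell in \<open>auto simp: hedge_def\<close>)
  have H2: "H_of P (i, l) = H_of P (k, l)"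
    by (rule H_of_eq) (use lt cell in \<open>auto simp: hedge_def\<close>)
  have V1: "V_of P (i, j) = V_of P (i, l)"
    by (rule V_of_eq) (use lt cell in \<open>auto simp: vedge_def\<close>)
  have V2: "V_of P (k, j) = V_of P (k, l)"
    by (rule V_of_eq) (use lt cell in \<open>auto simp: vedge_def\<close>)
  have cv: "(i, j) \<in> poly_vertices P" "(k, l) \<in> poly_vertices P" "(i, l) \<in> poly_vertices P" "(k, j) \<in> poly_vertices P"
    using corners_in[OF inn] by auto
  define A where "A x = {H. is_hole P H \<and> x \<in> F_set P H}" for x
  have finA: "finite (A x)" for x
    using finite_holes[OF finP] unfolding A_def by (rule finite_subset[rotated]) auto
  have notin: "\<not> (i \<le> fst (lower_left H) \<and> fst (lower_left H) < k \<and> j \<le> snd (lower_left H) \<and> snd (lower_left H) < l)"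
    if "is_hole P H" for H
  proof
    assume a: "i \<le> fst (lower_left H) \<and> fst (lower_left H) < k \<and> j \<le> snd (lower_left H) \<and> snd (lower_left H) < l"
    have "lower_left H \<in> H" by (rule lower_left_in[OF that])
    moreover have "lower_left H \<in> P" using cell[of "fst (lower_left H)" "snd (lower_left H)"] a by simp
    moreover have "H \<inter> P = {}" using that unfolding is_hole_def hole_cand_def by auto
    ultimately show False by blast
  qed
  have A1: "A (i, j) = A (i, l) \<union> A (k, j)"
  proof (rule set_eqI)
    fix H
    show "H \<in> A (i, j) \<longleftrightarrow> H \<in> A (i, l) \<union> A (k, j)"
    proof (cases "is_hole P H")
      case True
      then show ?thesis using notin[OF True] cv lt unfolding A_def F_set_def by auto
    next
      case False then show ?thesis unfolding A_def by auto
    qed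
  qed
  have A2: "A (k, l) = A (i, l) \<inter> A (k, j)"
    unfolding A_def F_set_def using cv lt notin by auto
  define e where "e H = Poly_Mapping.single (WVar H) (1::nat)" for H
  have W: "sum e (A (i, j)) + sum e (A (k, l)) = sum e (A (i, l)) + sum e (A (k, j))"
    unfolding A1 A2 by (rule sum.union_inter[OF finA finA])
  have pe: "phi_exp P x = Poly_Mapping.single (HVar (H_of P x)) 1 + Poly_Mapping.single (VVar (V_of P x)) 1 + sum e (A x)" for x
    unfolding phi_exp_def A_def e_def by simp
  define R where "R = Poly_Mapping.single (HVar (H_of P (k, j))) (1::nat) + Poly_Mapping.single (VVar (V_of P (i, l))) 1
     + Poly_Mapping.single (HVar (H_of P (k, l))) 1 + Poly_Mapping.single (VVar (V_of P (k, l))) 1"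
  have "phi_exp P (i, j) + phi_exp P (k, l) = R + (sum e (A (i, j)) + sum e (A (k, l)))"
    unfolding pe H1 H2 V1 V2 R_def by (simp add: ac_simps)
  also have "\<dots> = R + (sum e (A (i, l)) + sum e (A (k, j)))" using W by simp
  also have "\<dots> = phi_exp P (i, l) + phi_exp P (k, j)"
    unfolding pe H1 H2 V1 V2 R_def by (simp add: ac_simps)
  finally show ?thesis .
qed


lemma exists_s:
  assumes finP: "finite P"
    and "\<exists>i j k l. inner_interval P (i, j) (k, l) \<and>
           (({p, q} = {(i, j), (k, l)} \<and> r \<in> {(i, l), (k, j)}) \<or>
            ({p, q} = {(i, l), (k, j)} \<and> r \<in> {(i, j), (k, l)}))"
  shows "\<exists>s. s \<in> poly_vertices P \<and> p \<noteq> q \<and> phi_exp P p + phi_exp P q = phi_exp P r + phi_exp P s"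
proof -
  obtain i j k l where inn: "inner_interval P (i, j) (k, l)" and
    c: "({p, q} = {(i, j), (k, l)} \<and> r \<in> {(i, l), (k, j)}) \<or>
            ({p, q} = {(i, l), (k, j)} \<and> r \<in> {(i, j), (k, l)})"
    using assms(2) by blast
  have lt: "i < k" "j < l" using inn unfolding inner_interval_def by auto
  note cv = corners_in[OF inn]
  note ph = corners_phi[OF inn finP]
  from c show ?thesis
  proof
    assume a: "{p, q} = {(i, j), (k, l)} \<and> r \<in> {(i, l), (k, j)}"
    then have pq: "p \<noteq> q" "phi_exp P p + phi_exp P q = phi_exp P (i, j) + phi_exp P (k, l)"
      using lt by (auto simp: doubleton_eq_iff add.commute)
    show ?thesis
    proof (cases "r = (i, l)")
      case True
      then show ?thesis using pq ph cv by (intro exI[of _ "(k, j)"]) auto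
    next
      case False
      then have "r = (k, j)" using a by auto
      then show ?thesis using pq ph cv by (intro exI[of _ "(i, l)"]) (auto simp: add.commute)
    qed
  next
    assume a: "{p, q} = {(i, l), (k, j)} \<and> r \<in> {(i, j), (k, l)}"
    then have pq: "p \<noteq> q" "phi_exp P p + phi_exp P q = phi_exp P (i, l) + phi_exp P (k, j)"
      using lt by (auto simp: doubleton_eq_iff add.commute)
    show ?thesis
    proof (cases "r = (i, j)")
      case True
      then show ?thesis using pq ph cv by (intro exI[of _ "(k, l)"]) auto
    next
      case False
      then have "r = (k, l)" using a by auto
      then show ?thesis using pq ph cv by (intro exI[of _ "(i, j)"]) (auto simp: add.commute)
    qed
  qed
qed


theorem lemma4p2:
  fixes P :: "cell set" and u w :: mono and f :: "'a::field spoly"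
  assumes "polyomino P"
    and "Poly_Mapping.keys u \<subseteq> poly_vertices P" and "Poly_Mapping.keys w \<subseteq> poly_vertices P"
    and "f = monom u - monom w"
    and "f \<in> toric_ideal P"
    and "poly_deg f \<ge> 3"
    and "p \<in> Poly_Mapping.keys u" and "q \<in> Poly_Mapping.keys u" and "r \<in> Poly_Mapping.keys w"
    and "\<exists>i j k l. inner_interval P (i, j) (k, l) \<and>
           (({p, q} = {(i, j), (k, l)} \<and> r \<in> {(i, l), (k, j)}) \<or>
            ({p, q} = {(i, l), (k, j)} \<and> r \<in> {(i, j), (k, l)}))"
  shows "redundant {g. in_S P g} (toric_ideal P) f"
proof -
  have finP: "finite P" using assms(1) unfolding polyomino_def by auto
  obtain s where s: "s \<in> poly_vertices P" "p \<noteq> q"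
    "phi_exp P p + phi_exp P q = phi_exp P r + phi_exp P s"
    using exists_s[OF finP assms(10)] by blast
  have uw: "u \<noteq> w"
  proof
    assume "u = w"
    then have "f = 0" using assms(4) by simp
    then show False using assms(6) by (simp add: poly_deg_def)
  qed
  have phif: "phi P f = 0" using assms(5) unfolding toric_ideal_def by simp
  then have phiuw: "phi_mono P u = phi_mono P w" using assms(4) phi_zero_iff by metis
  define ep where "ep = Poly_Mapping.single p (1::nat)"
  define eq where "eq = Poly_Mapping.single q (1::nat)"
  define er where "er = Poly_Mapping.single r (1::nat)"
  define es where "es = Poly_Mapping.single s (1::nat)"
  define u' where "u' = u - ep - eq"
  define w' where "w' = w - er"
  have lp: "Poly_Mapping.lookup u p \<ge> 1" "Poly_Mapping.lookup u q \<ge> 1" "Poly_Mapping.lookup w r \<ge> 1"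
    using assms(7,8,9) by (auto simp: in_keys_iff)
  have u_dec: "u = u' + ep + eq"
    by (rule poly_mapping_eqI) (use lp s(2) in \<open>auto simp: u'_def ep_def eq_def lookup_add lookup_minus lookup_single when_def\<close>)
  have w_dec: "w = w' + er"
    by (rule poly_mapping_eqI) (use lp in \<open>auto simp: w'_def er_def lookup_add lookup_minus lookup_single when_def\<close>)
  have ku': "Poly_Mapping.keys u' \<subseteq> poly_vertices P"
  proof -
    have "Poly_Mapping.keys u' \<subseteq> Poly_Mapping.keys u"
      by (auto simp: u'_def in_keys_iff lookup_minus)
    then show ?thesis using assms(2) by blast
  qed
  have kw': "Poly_Mapping.keys w' \<subseteq> poly_vertices P"
  proof -
    have "Poly_Mapping.keys w' \<subseteq> Poly_Mapping.keys w"
      by (auto simp: w'_def in_keys_iff lookup_minus)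
    then show ?thesis using assms(3) by blast
  qed
  have pqrV: "p \<in> poly_vertices P" "q \<in> poly_vertices P" "r \<in> poly_vertices P"
    using assms(2,3,7,8,9) by auto
  define g1 :: "'a spoly" where "g1 = monom (ep + eq) - monom (er + es)"
  define g2 :: "'a spoly" where "g2 = monom (u' + es) - monom w'"
  have keys_single1: "Poly_Mapping.keys (Poly_Mapping.single x (1::nat)) = {x}" for x by simp
  have g1S: "in_S P g1" unfolding g1_def
    by (rule in_S_monom_diff; rule order.trans[OF keys_add])
       (use pqrV s(1) in \<open>auto simp: ep_def eq_def er_def es_def\<close>)
  have g2S: "in_S P g2" unfolding g2_def
  proof (rule in_S_monom_diff[OF _ kw'])
    show "Poly_Mapping.keys (u' + es) \<subseteq> poly_vertices P"
      using keys_add[of u' es] ku' s(1) by (auto simp: es_def)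
  qed
  have g1J: "g1 \<in> toric_ideal P"
    unfolding toric_ideal_def using g1S s(3)
    by (simp add: g1_def phi_zero_iff phi_mono_add ep_def eq_def er_def es_def phi_mono_single phi_mono_single[simplified])
  have "phi_mono P w' + phi_exp P r = phi_mono P u' + phi_exp P r + phi_exp P s"
    using phiuw s(3) unfolding u_dec w_dec
    by (simp add: phi_mono_add phi_mono_single phi_mono_single[simplified] ep_def eq_def er_def ac_simps)
  then have "phi_mono P (u' + es) = phi_mono P w'"
    by (simp add: phi_mono_add phi_mono_single phi_mono_single[simplified] es_def ac_simps)
  then have g2J: "g2 \<in> toric_ideal P"
    unfolding toric_ideal_def using g2S by (simp add: g2_def phi_zero_iff)
  have degf: "poly_deg f = max (mono_deg u) (mono_deg w)"
    using assms(4) uw by (simp add: poly_deg_monom_diff)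
  have du: "mono_deg u = mono_deg u' + 2" unfolding u_dec
    by (simp add: mono_deg_add mono_deg_single mono_deg_single[simplified] ep_def eq_def)
  have dw: "mono_deg w = mono_deg w' + 1" unfolding w_dec
    by (simp add: mono_deg_add mono_deg_single mono_deg_single[simplified] er_def)
  have dg1: "poly_deg g1 < poly_deg f"
    using poly_deg_monom_diff_le[of "ep + eq" "er + es", where 'a='a] assms(6)
    by (simp add: g1_def mono_deg_add mono_deg_single mono_deg_single[simplified] ep_def eq_def er_def es_def)
  have dg2: "poly_deg g2 < poly_deg f"
    using poly_deg_monom_diff_le[of "u' + es" "w'", where 'a='a] degf du dw
    by (simp add: g2_def mono_deg_add mono_deg_single mono_deg_single[simplified] es_def)
  have c1: "in_S P (monom u' :: 'a spoly)" using ku' by (simp add: in_S_monom)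
  have c2: "in_S P (monom er :: 'a spoly)" using pqrV by (simp add: in_S_monom er_def)
  have feq: "f = monom u' * g1 + monom er * g2"
  proof -
    have "monom u' * g1 + monom er * g2 =
       (monom (u' + (ep + eq)) - monom (u' + (er + es))) + (monom (er + (u' + es)) - monom (er + w') :: 'a spoly)"
      by (simp add: g1_def g2_def right_diff_distrib monom_mult)
    also have "\<dots> = monom u - monom w"
      by (simp add: u_dec w_dec ac_simps)
    finally show ?thesis using assms(4) by simp
  qed
  show ?thesis
    unfolding redundant_def
    apply (rule exI[of _ "[(monom u', g1), (monom er, g2)]"])
    using c1 c2 g1J g2J dg1 dg2 feq unfolding is_binomial_def g1_def g2_def
    by auto
qed

end
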